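(* Let $0<p<1$, $n\ge2$, and let $X_1,\dots,X_n$ be i.i.d. with density $f_p(x)=px^{p-1}$, $0<x\le1$. Let $Q=\sum_{i=1}^n(X_i-\overline X)^2$. Then as $x\to0^+$, $$P\{Q\le x\}=O\big(x^{\min(pn,\,n-1)/2}\big)\ \text{ if } np\ne n-1,\qquad P\{Q\le x\}=O\big(x^{(n-1)/2}\ln(1/x)\big)\ \text{ if } np=n-1.$$ *)

theory Defs
  imports "HOL-Probability.Probability" "HOL-Library.Landau_Symbols"
begin

definition fp :: "real \<Rightarrow> real \<Rightarrow> ennreal" where
  "fp p x = (if 0 < x \<and> x \<le> 1 then ennreal (p * x powr (p - 1)) else 0)"

definition sample_Q :: "nat \<Rightarrow> (nat \<Rightarrow> real) \<Rightarrow> real" where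
  "sample_Q n x = (\<Sum>i<n. (x i - (\<Sum>j<n. x j) / real n)\<^sup>2)"

end

theory Submission
  imports Defs
begin



lemma fp_meas[measurable]: "fp p \<in> borel_measurable borel"
  unfolding fp_def by measurable

lemma Pgt1:
  assumes "prob_space M" "distributed M lborel Y (fp p)"
  shows "measure M {\<omega>\<in>space M. 1 < Y \<omega>} = 0"
proof -
  have e: "{\<omega>\<in>space M. 1 < Y \<omega>} = Y -` {1<..} \<inter> space M" by auto
  have "emeasure M (Y -` {1<..} \<inter> space M) = (\<integral>\<^sup>+x. fp p x * indicator {1<..} x \<partial>lborel)"
    by (rule distributed_emeasure[OF assms(2)]) auto
  also have "(\<lambda>x. fp p x * indicator {1<..} x) = (\<lambda>x. 0)"
    by (auto simp: fp_def indicator_def)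
  finally show ?thesis by (simp add: e measure_def)
qed

lemma Pico:
  assumes "prob_space M" "distributed M lborel Y (fp p)" "0 < u" "u \<le> v" "0 < p" "p < 1"
  shows "measure M {\<omega>\<in>space M. u \<le> Y \<omega> \<and> Y \<omega> < v} \<le> p * u powr (p-1) * (v-u)"
proof -
  interpret prob_space M by fact
  have e: "{\<omega>\<in>space M. u \<le> Y \<omega> \<and> Y \<omega> < v} = Y -` {u..<v} \<inter> space M" by auto
  have "emeasure M (Y -` {u..<v} \<inter> space M) = (\<integral>\<^sup>+x. fp p x * indicator {u..<v} x \<partial>lborel)"
    by (rule distributed_emeasure[OF assms(2)]) auto
  also have "\<dots> \<le> (\<integral>\<^sup>+x. ennreal (p * u powr (p-1)) * indicator {u..<v} x \<partial>lborel)"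
  proof (rule nn_integral_mono)
    fix x
    show "fp p x * indicator {u..<v} x \<le> ennreal (p * u powr (p-1)) * indicator {u..<v} x"
    proof (cases "x \<in> {u..<v}")
      case True
      then have "x powr (p-1) \<le> u powr (p-1)" using assms
        by (intro powr_mono2') auto
      then have "p * x powr (p-1) \<le> p * u powr (p-1)" using assms by simp
      then show ?thesis using True assms by (auto simp: fp_def indicator_def intro: ennreal_leI)
    qed auto
  qed
  also have "\<dots> = ennreal (p * u powr (p-1)) * ennreal (v-u)"
    using assms by (simp add: nn_integral_cmult_indicator)
  also have "\<dots> = ennreal (p * u powr (p-1) * (v-u))"
    using assms by (simp add: ennreal_mult)
  finally have "ennreal (measure M (Y -` {u..<v} \<inter> space M)) \<le> ennreal (p * u powr (p-1) * (v-u))"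
    by (simp add: emeasure_eq_measure)
  then show ?thesis using assms by (simp add: e ennreal_le_iff)
qed

lemma Plt:
  assumes "prob_space M" "distributed M lborel Y (fp p)" "0 < c" "0 < p" "p < 1"
  shows "measure M {\<omega>\<in>space M. Y \<omega> < c} \<le> c powr p"
proof (cases "c < 1")
  case False
  interpret prob_space M by fact
  have "measure M {\<omega>\<in>space M. Y \<omega> < c} \<le> 1" by simp
  also have "1 \<le> c powr p" using False assms by (simp add: ge_one_powr_ge_zero)
  finally show ?thesis .
next
  case True
  interpret prob_space M by fact
  have ev: "Y \<in> measurable M lborel" using assms(2) by (simp add: distributed_def)
  have e: "{\<omega>\<in>space M. c \<le> Y \<omega> \<and> Y \<omega> \<le> 1} = Y -` {c..1} \<inter> space M" by auto
  have "emeasure M (Y -` {c..1} \<inter> space M) = (\<integral>\<^sup>+x. fp p x * indicator {c..1} x \<partial>lborel)"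
    by (rule distributed_emeasure[OF assms(2)]) auto
  also have "\<dots> = (\<integral>\<^sup>+x. ennreal (p * x powr (p-1)) * indicator {c..1} x \<partial>lborel)"
    by (rule nn_integral_cong) (use assms in \<open>auto simp: fp_def indicator_def\<close>)
  also have "\<dots> = ennreal (1 powr p - c powr p)"
  proof (rule nn_integral_has_integral_lebesgue')
    show "\<And>x. x \<in> {c..1} \<Longrightarrow> 0 \<le> p * x powr (p - 1)" using assms by simp
    show "((\<lambda>x. p * x powr (p - 1)) has_integral 1 powr p - c powr p) {c..1}"
    proof (rule fundamental_theorem_of_calculus)
      show "c \<le> 1" using True by simp
      fix x assume x: "x \<in> {c..1}"
      then have "x > 0" using assms by auto
      then have "((\<lambda>x. x powr p) has_real_derivative p * x powr (p - 1)) (at x)"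
        by (auto intro!: derivative_eq_intros)
      then show "((\<lambda>x. x powr p) has_vector_derivative p * x powr (p - 1)) (at x within {c..1})"
        by (simp add: has_real_derivative_iff_has_vector_derivative has_vector_derivative_at_within)
    qed
  qed
  finally have m1: "measure M {\<omega>\<in>space M. c \<le> Y \<omega> \<and> Y \<omega> \<le> 1} = 1 - c powr p"
    using True assms by (simp add: e emeasure_eq_measure powr_le1)
  have "measure M {\<omega>\<in>space M. Y \<omega> < c} + measure M {\<omega>\<in>space M. c \<le> Y \<omega> \<and> Y \<omega> \<le> 1}
      = measure M ({\<omega>\<in>space M. Y \<omega> < c} \<union> {\<omega>\<in>space M. c \<le> Y \<omega> \<and> Y \<omega> \<le> 1})"
    using ev by (intro finite_measure_Union[symmetric]) auto
  also have "\<dots> \<le> 1" by simp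
  finally show ?thesis using m1 by simp
qed




lemma mvt_powr:
  fixes x y q :: real
  assumes "0 < x" "x < y"
  shows "\<exists>z>x. z < y \<and> y powr q - x powr q = (y - x) * (q * z powr (q - 1))"
  using assms by (intro MVT2) (auto intro!: derivative_eq_intros)

lemma step_lt1:
  fixes a :: real and m :: nat
  assumes "0 < a" "a < 1" "m \<ge> 1"
  shows "(1 - a) * real (Suc m) powr (-a) \<le> real (Suc m) powr (1-a) - real m powr (1-a)"
proof -
  obtain z where z: "z > real m" "z < real (Suc m)"
    "real (Suc m) powr (1-a) - real m powr (1-a) = (real (Suc m) - real m) * ((1-a) * z powr (1 - a - 1))"
    using mvt_powr[of "real m" "real (Suc m)" "1-a"] assms by auto
  have "real (Suc m) powr (-a) \<le> z powr (-a)"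
    using z assms by (intro powr_mono2') auto
  then show ?thesis using z(3) assms by (simp add: mult_left_mono)
qed

lemma step_gt1:
  fixes a :: real and m :: nat
  assumes "1 < a" "m \<ge> 1"
  shows "(a - 1) * real (Suc m) powr (-a) \<le> real m powr (1-a) - real (Suc m) powr (1-a)"
proof -
  obtain z where z: "z > real m" "z < real (Suc m)"
    "real (Suc m) powr (1-a) - real m powr (1-a) = (real (Suc m) - real m) * ((1-a) * z powr (1 - a - 1))"
    using mvt_powr[of "real m" "real (Suc m)" "1-a"] assms by auto
  have "real (Suc m) powr (-a) \<le> z powr (-a)"
    using z assms by (intro powr_mono2') auto
  then have "(a-1) * real (Suc m) powr (-a) \<le> (a-1) * z powr (-a)"
    using assms by (intro mult_left_mono) auto
  moreover have "z powr (1 - a - 1) = z powr (-a)" by simp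
  ultimately show ?thesis using z(3) by (simp add: algebra_simps)
qed

lemma sum_lt1:
  fixes a :: real
  assumes "0 < a" "a < 1"
  shows "(\<Sum>j\<in>{1..m}. real j powr (-a)) \<le> real m powr (1-a) / (1-a)"
proof (induction m)
  case 0 then show ?case by simp
next
  case (Suc m)
  show ?case
  proof (cases "m = 0")
    case True then show ?thesis using assms by (simp add: field_simps)
  next
    case False
    have "(\<Sum>j\<in>{1..Suc m}. real j powr (-a)) = (\<Sum>j\<in>{1..m}. real j powr (-a)) + real (Suc m) powr (-a)"
      by simp
    also have "\<dots> \<le> real m powr (1-a) / (1-a) + (real (Suc m) powr (1-a) - real m powr (1-a)) / (1-a)"
    proof (rule add_mono[OF Suc.IH])
      show "real (Suc m) powr (-a) \<le> (real (Suc m) powr (1-a) - real m powr (1-a)) / (1-a)"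
        using step_lt1[of a m] assms False by (simp add: pos_le_divide_eq mult.commute)
    qed
    also have "\<dots> = real (Suc m) powr (1-a) / (1-a)" by (simp add: add_divide_distrib[symmetric])
    finally show ?thesis .
  qed
qed

lemma sum_gt1:
  fixes a :: real
  assumes "1 < a" "m \<ge> 1"
  shows "(\<Sum>j\<in>{1..m}. real j powr (-a)) \<le> 1 + (1 - real m powr (1-a)) / (a - 1)"
  using assms(2)
proof (induction m rule: nat_induct_at_least)
  case base then show ?case by simp
next
  case (Suc m)
  have "(\<Sum>j\<in>{1..Suc m}. real j powr (-a)) = (\<Sum>j\<in>{1..m}. real j powr (-a)) + real (Suc m) powr (-a)"
    by simp
  also have "\<dots> \<le> 1 + (1 - real m powr (1-a)) / (a - 1) + (real m powr (1-a) - real (Suc m) powr (1-a)) / (a-1)"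
  proof (rule add_mono[OF Suc.IH])
    show "real (Suc m) powr (-a) \<le> (real m powr (1-a) - real (Suc m) powr (1-a)) / (a-1)"
      using step_gt1[of a m] assms Suc by (simp add: pos_le_divide_eq mult.commute)
  qed
  also have "\<dots> = 1 + (1 - real (Suc m) powr (1-a)) / (a - 1)" by (simp add: add_divide_distrib[symmetric])
  finally show ?case .
qed

lemma sum_gt1':
  fixes a :: real
  assumes "1 < a"
  shows "(\<Sum>j\<in>{1..m}. real j powr (-a)) \<le> a / (a - 1)"
proof (cases "m = 0")
  case True then show ?thesis using assms by simp
next
  case False
  then have "(\<Sum>j\<in>{1..m}. real j powr (-a)) \<le> 1 + (1 - real m powr (1-a)) / (a - 1)"
    using sum_gt1[OF assms] by simp
  also have "\<dots> \<le> 1 + 1 / (a-1)" using assms by (simp add: divide_right_mono)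
  also have "\<dots> = a / (a-1)" using assms by (simp add: field_simps)
  finally show ?thesis .
qed

lemma sum_eq1:
  assumes "m \<ge> 1"
  shows "(\<Sum>j\<in>{1..m}. real j powr (-1)) \<le> 1 + ln (real m)"
  using assms
proof (induction m rule: nat_induct_at_least)
  case base then show ?case by simp
next
  case (Suc m)
  have "(\<Sum>j\<in>{1..Suc m}. real j powr (-1)) = (\<Sum>j\<in>{1..m}. real j powr (-1)) + real (Suc m) powr (-1)"
    by simp
  also have "real (Suc m) powr (-1) \<le> ln (real (Suc m)) - ln (real m)"
  proof -
    have "\<exists>z>real m. z < real (Suc m) \<and> ln (real (Suc m)) - ln (real m) = (real (Suc m) - real m) * inverse z"
      by (rule MVT2) (use Suc in \<open>auto intro!: DERIV_ln\<close>)
    then obtain z where z: "z > real m" "z < real (Suc m)" "ln (real (Suc m)) - ln (real m) = (real (Suc m) - real m) * inverse z"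
      by blast
    have "inverse (real (Suc m)) \<le> inverse z" using z Suc by (intro le_imp_inverse_le) auto
    moreover have "real (Suc m) powr (-1) = inverse (real (Suc m))" by (simp add: powr_minus)
    ultimately show ?thesis using z(3) by simp
  qed
  finally show ?case using Suc by simp
qed



lemma aux_ceil: "0 < (y::real) \<Longrightarrow> real (nat \<lceil>y\<rceil> - 1) \<le> y"
proof -
  assume y: "0 < y"
  have "1 \<le> nat \<lceil>y\<rceil>" using y by (simp add: le_nat_iff)
  then have "real (nat \<lceil>y\<rceil> - 1) = real_of_int \<lceil>y\<rceil> - 1" using y by (simp add: of_nat_diff)
  also have "\<dots> \<le> y" by linarith
  finally show ?thesis .
qed
lemma aux_ceil2: "3 \<le> (y::real) \<Longrightarrow> 1 \<le> nat \<lceil>y\<rceil> - 1"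
  by (simp add: le_nat_iff le_diff_conv) linarith



lemma dev:
  assumes "sample_Q n y \<le> x" "i < n"
  shows "\<bar>y i - (\<Sum>j<n. y j) / real n\<bar> \<le> sqrt x"
proof -
  have "(y i - (\<Sum>j<n. y j) / real n)\<^sup>2 \<le> sample_Q n y"
    unfolding sample_Q_def using assms(2)
    by (intro member_le_sum) auto
  then have "(y i - (\<Sum>j<n. y j) / real n)\<^sup>2 \<le> x" using assms(1) by linarith
  then have "sqrt ((y i - (\<Sum>j<n. y j) / real n)\<^sup>2) \<le> sqrt x" by (rule real_sqrt_le_mono)
  then show ?thesis by simp
qed

lemma dev2:
  assumes "sample_Q n y \<le> x" "i < n"
  shows "\<bar>y i - y 0\<bar> \<le> 2 * sqrt x"
  using dev[OF assms] dev[OF assms(1), of 0] assms(2) by linarith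

lemma powr_pow: "0 < (y::real) \<Longrightarrow> (y powr r)^n = y powr (r * real n)"
  by (simp add: powr_realpow[symmetric] powr_powr)

lemma core:
  fixes M :: "'a measure" and X :: "nat \<Rightarrow> 'a \<Rightarrow> real" and p :: real and n :: nat
  assumes "prob_space M"
    and p: "0 < p" "p < 1" and n: "n \<ge> 2"
    and ind: "prob_space.indep_vars M (\<lambda>_. borel) X {..<n}"
    and dist: "\<And>i. i < n \<Longrightarrow> distributed M lborel (X i) (fp p)"
    and x: "0 < x" and d: "2 * sqrt x \<le> 1/3"
  shows "measure M {\<omega> \<in> space M. sample_Q n (\<lambda>i. X i \<omega>) \<le> x}
    \<le> 2 * (3 * (2 * sqrt x)) powr (p * real n) + (3*p)^n * (2 * sqrt x) powr (p * real n) *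
       (\<Sum>j\<in>{1..nat \<lceil>1 / (2 * sqrt x)\<rceil> - 1}. real j powr (- (real n * (1 - p))))"
proof -
  interpret prob_space M by fact
  define d where "d = 2 * sqrt x"
  have d0: "0 < d" using x by (simp add: d_def)
  define K where "K = nat \<lceil>1/d\<rceil>"
  have K3: "K \<ge> 3" using d d0 unfolding K_def d_def[symmetric] by (simp add: field_simps le_nat_iff)
  define J where "J k = (if k \<le> 1 then {..<3*d} else {(real k - 1)*d..<(real k + 2)*d})" for k :: nat
  define E where "E k = (\<Inter>i\<in>{..<n}. X i -` J k \<inter> space M)" for k
  define C where "C = {\<omega>\<in>space M. 1 < X 0 \<omega>}"
  have rv: "\<And>i. i < n \<Longrightarrow> X i \<in> measurable M borel"
    using dist by (auto simp: distributed_def)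
  have Jb: "J k \<in> sets borel" for k by (simp add: J_def)
  have Eev: "E k \<in> events" for k
    unfolding E_def using n rv Jb by (intro sets.finite_INT) (auto simp: lessThan_empty_iff)
  have Cev: "C \<in> events"
  proof -
    have "C = X 0 -` {1<..} \<inter> space M" by (auto simp: C_def)
    then show ?thesis using rv[of 0] n by (auto intro: measurable_sets)
  qed
  have incl: "{\<omega> \<in> space M. sample_Q n (\<lambda>i. X i \<omega>) \<le> x} \<subseteq> (\<Union>k\<in>{0..K}. E k) \<union> C"
  proof
    fix \<omega> assume w: "\<omega> \<in> {\<omega> \<in> space M. sample_Q n (\<lambda>i. X i \<omega>) \<le> x}"
    show "\<omega> \<in> (\<Union>k\<in>{0..K}. E k) \<union> C"
    proof (cases "1 < X 0 \<omega>")
      case True then show ?thesis using w by (auto simp: C_def)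
    next
      case False
      have cl: "\<bar>X i \<omega> - X 0 \<omega>\<bar> \<le> d" if "i < n" for i
        using dev2[of n "\<lambda>i. X i \<omega>" x i] w that by (auto simp: d_def)
      show ?thesis
      proof (cases "X 0 \<omega> < 2 * d")
        case True
        have "\<omega> \<in> E 0" using w cl True by (fastforce simp: E_def J_def)
        then show ?thesis by auto
      next
        case False2: False
        define k where "k = nat \<lfloor>X 0 \<omega> / d\<rfloor>"
        have fl: "real k \<le> X 0 \<omega> / d" "X 0 \<omega> / d < real k + 1"
        proof -
          have "0 \<le> X 0 \<omega> / d" using False2 d0 by simp
          then have "real k = real_of_int \<lfloor>X 0 \<omega> / d\<rfloor>" unfolding k_def by simp
          then show "real k \<le> X 0 \<omega> / d" "X 0 \<omega> / d < real k + 1"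
            by (simp_all add: of_int_floor_le real_of_int_floor_add_one_gt)
        qed
        have k2: "k \<ge> 2" using False2 d0 unfolding k_def by (simp add: le_nat_iff le_floor_iff field_simps)
        have kK: "k \<le> K" unfolding k_def K_def using False d0
          by (intro nat_mono floor_le_ceiling[THEN order_trans] ceiling_mono) (auto simp: divide_right_mono)
        have fl2: "real k * d \<le> X 0 \<omega>" "X 0 \<omega> < (real k + 1) * d"
          using fl d0 by (auto simp: field_simps)
        have "\<omega> \<in> E k" using w cl fl2 k2 by (fastforce simp: E_def J_def algebra_simps)
        then show ?thesis using kK by auto
      qed
    qed
  qed
  define b where "b k = (if k \<le> 1 then (3*d) powr p else p * ((real k - 1) * d) powr (p - 1) * (3 * d))" for k :: nat
  have PE: "measure M (E k) \<le> b k ^ n" for k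
  proof -
    have "measure M (E k) = (\<Prod>i\<in>{..<n}. measure M (X i -` J k \<inter> space M))"
      unfolding E_def
    proof (rule indep_setsD)
      show "indep_sets (\<lambda>i. {X i -` A \<inter> space M | A. A \<in> sets borel}) {..<n}"
        using ind by (simp add: indep_vars_def2)
    qed (use n Jb in \<open>auto simp: lessThan_empty_iff\<close>)
    also have "\<dots> \<le> (\<Prod>i\<in>{..<n}. b k)"
    proof (rule prod_mono)
      fix i assume i: "i \<in> {..<n}"
      show "0 \<le> measure M (X i -` J k \<inter> space M) \<and> measure M (X i -` J k \<inter> space M) \<le> b k"
      proof (cases "k \<le> 1")
        case True
        have "X i -` J k \<inter> space M = {\<omega>\<in>space M. X i \<omega> < 3*d}" using True by (auto simp: J_def)
        then show ?thesis using Plt[OF \<open>prob_space M\<close> dist[of i], of "3*d"] i True d0 p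
          by (simp add: b_def)
      next
        case False
        have "X i -` J k \<inter> space M = {\<omega>\<in>space M. (real k - 1)*d \<le> X i \<omega> \<and> X i \<omega> < (real k + 2)*d}"
          using False by (auto simp: J_def)
        moreover have "(real k + 2) * d - (real k - 1) * d = 3 * d" by (simp add: algebra_simps)
        ultimately show ?thesis
          using Pico[OF \<open>prob_space M\<close> dist[of i], of "(real k - 1)*d" "(real k + 2)*d"] i False d0 p
          by (simp add: b_def)
      qed
    qed
    finally show ?thesis by simp
  qed
  have "measure M {\<omega> \<in> space M. sample_Q n (\<lambda>i. X i \<omega>) \<le> x} \<le> measure M ((\<Union>k\<in>{0..K}. E k) \<union> C)"
    using Eev Cev by (intro finite_measure_mono[OF incl]) auto
  also have "\<dots> \<le> measure M (\<Union>k\<in>{0..K}. E k) + measure M C"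
    using Eev Cev by (intro measure_Un_le) auto
  also have "measure M C = 0" unfolding C_def using Pgt1[OF \<open>prob_space M\<close> dist[of 0]] n by simp
  also have "measure M (\<Union>k\<in>{0..K}. E k) \<le> (\<Sum>k\<in>{0..K}. measure M (E k))"
    using Eev by (intro finite_measure_subadditive_finite) auto
  also have "\<dots> \<le> (\<Sum>k\<in>{0..K}. b k ^ n)" by (intro sum_mono PE)
  also have "{0..K} = {0..1} \<union> {2..K}" using K3 by auto
  also have "(\<Sum>k\<in>{0..1} \<union> {2..K}. b k ^ n) = (\<Sum>k\<in>{0..1}. b k ^ n) + (\<Sum>k\<in>{2..K}. b k ^ n)"
    by (intro sum.union_disjoint) auto
  also have "(\<Sum>k\<in>{0..1}. b k ^ n) = 2 * (3 * d) powr (p * real n)"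
    using d0 by (simp add: b_def powr_pow numeral_2_eq_2)
  also have "(\<Sum>k\<in>{2..K}. b k ^ n) = (\<Sum>k\<in>{2..K}. (3*p)^n * d powr (p * real n) * real (k - 1) powr (- (real n * (1 - p))))"
  proof (rule sum.cong[OF refl])
    fix k assume k: "k \<in> {2..K}"
    have r: "real (k - 1) = real k - 1" using k by auto
    have e1: "((real k - 1) * d) powr (p-1) = (real k - 1) powr (p-1) * d powr (p-1)"
      using k d0 by (simp add: powr_mult)
    have e2: "d powr (p-1) * d = d powr p" using d0 by (simp add: powr_diff)
    have "b k = (3*p) * ((real k - 1) powr (p - 1) * (d powr (p-1) * d))"
    proof -
      have b1: "b k = p * ((real k - 1) * d) powr (p - 1) * (3 * d)" using k by (simp add: b_def)
      show ?thesis unfolding b1 e1 by (simp only: mult_ac)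
    qed
    then have "b k = (3*p) * (real (k-1) powr (p - 1) * d powr p)"
      by (simp only: e2 r)
    then have "b k ^ n = (3*p)^n * (real (k-1) powr (p - 1))^n * (d powr p)^n"
      by (simp add: power_mult_distrib)
    also have "\<dots> = (3*p)^n * d powr (p * real n) * real (k - 1) powr (- (real n * (1 - p)))"
      using k d0 by (simp add: powr_pow algebra_simps)
    finally show "b k ^ n = (3*p)^n * d powr (p * real n) * real (k - 1) powr (- (real n * (1 - p)))" .
  qed
  also have "\<dots> = (3*p)^n * d powr (p * real n) * (\<Sum>k\<in>{2..K}. real (k - 1) powr (- (real n * (1 - p))))"
    by (simp add: sum_distrib_left)
  also have "(\<Sum>k\<in>{2..K}. real (k - 1) powr (- (real n * (1 - p)))) = (\<Sum>j\<in>{1..K-1}. real j powr (- (real n * (1 - p))))"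
  proof -
    have A: "(\<Sum>k\<in>{1+1..(K-1)+1}. real (k - 1) powr (- (real n * (1 - p)))) = (\<Sum>j\<in>{1..K-1}. real (j + 1 - 1) powr (- (real n * (1 - p))))"
      by (rule sum.shift_bounds_cl_nat_ivl)
    have C: "{1+1..(K-1)+1} = {2..K}" using K3 by auto
    have A': "(\<Sum>k\<in>{2..K}. real (k - 1) powr (- (real n * (1 - p)))) = (\<Sum>j\<in>{1..K-1}. real (j + 1 - 1) powr (- (real n * (1 - p))))"
      using A by (simp only: C)
    have B: "(\<Sum>j\<in>{1..K-1}. real (j + 1 - 1) powr (- (real n * (1 - p)))) = (\<Sum>j\<in>{1..K-1}. real j powr (- (real n * (1 - p))))"
      by simp
    show ?thesis by (simp only: A' B)
  qed
  finally show ?thesis by (simp add: d_def K_def)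
qed




lemma delta_powr: "0 < x \<Longrightarrow> (2 * sqrt x) powr e = 2 powr e * x powr (e / 2)"
  by (simp add: powr_mult powr_half_sqrt[symmetric] powr_powr)

theorem lemma2:
  fixes M :: "'a measure" and X :: "nat \<Rightarrow> 'a \<Rightarrow> real" and p :: real and n :: nat
  assumes "prob_space M"
    and "0 < p" and "p < 1" and "n \<ge> 2"
    and "prob_space.indep_vars M (\<lambda>_. borel) X {..<n}"
    and "\<And>i. i < n \<Longrightarrow> distributed M lborel (X i) (fp p)"
  shows "(p * real n \<noteq> real n - 1 \<longrightarrow>
            (\<lambda>x. measure M {\<omega> \<in> space M. sample_Q n (\<lambda>i. X i \<omega>) \<le> x})
              \<in> O[at_right 0](\<lambda>x. x powr (min (p * real n) (real n - 1) / 2)))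
       \<and> (p * real n = real n - 1 \<longrightarrow>
            (\<lambda>x. measure M {\<omega> \<in> space M. sample_Q n (\<lambda>i. X i \<omega>) \<le> x})
              \<in> O[at_right 0](\<lambda>x. x powr ((real n - 1) / 2) * ln (1 / x)))"
proof -
  interpret prob_space M by fact
  define a where "a = real n * (1 - p)"
  define e where "e = p * real n"
  have ae: "e = real n - a" by (simp add: a_def e_def algebra_simps)
  have a0: "0 < a" using assms by (simp add: a_def)
  have e0: "0 < e" using assms by (simp add: e_def)
  define P where "P = (\<lambda>x. measure M {\<omega> \<in> space M. sample_Q n (\<lambda>i. X i \<omega>) \<le> x})"
  define m where "m x = nat \<lceil>1 / (2 * sqrt x)\<rceil> - 1" for x :: real
  define S where "S x = (\<Sum>j\<in>{1..m x}. real j powr (-a))" for x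
  define dl where "dl x = 2 * sqrt x" for x :: real
  have dl0: "0 < dl x" "dl x \<le> 1/3" if "0 < x" "x < 1/36" for x
  proof -
    have "sqrt x < sqrt ((1/6)^2)" using that by (intro real_sqrt_less_mono) (simp add: power2_eq_square)
    then show "0 < dl x" "dl x \<le> 1/3" using that by (auto simp: dl_def)
  qed
  have core': "P x \<le> 2 * (3 * dl x) powr e + (3*p)^n * dl x powr e * S x" if x: "0 < x" "x < 1/36" for x
    unfolding P_def S_def m_def e_def a_def
    using core[OF assms(1-6) x(1)] dl0[OF x] by (simp add: dl_def)
  have mle: "real (m x) \<le> 1 / dl x" if "0 < x" for x
    unfolding m_def dl_def using that by (intro aux_ceil) simp
  have P0: "0 \<le> P x" for x by (simp add: P_def)
  have S0: "0 \<le> S x" for x by (simp add: S_def sum_nonneg)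
  have dle: "dl x powr r = 2 powr r * x powr (r/2)" if "0 < x" for x r
    unfolding dl_def using that by (rule delta_powr)
  have three: "(3 * dl x) powr e = 3 powr e * dl x powr e" if "0 < x" for x
  proof - have "0 \<le> dl x" using that by (simp add: dl_def) then show ?thesis by (simp add: powr_mult) qed
  have evx: "eventually (\<lambda>x. 0 < x \<and> x < 1/36) (at_right (0::real))"
    unfolding eventually_at_right_field by (intro exI[of _ "1/36"]) auto
  show ?thesis unfolding P_def[symmetric]
  proof (intro conjI impI)
    assume ne: "p * real n \<noteq> real n - 1"
    show "P \<in> O[at_right 0](\<lambda>x. x powr (min (p * real n) (real n - 1) / 2))"
    proof (cases "a > 1")
      case True
      have mn: "min (p * real n) (real n - 1) = e" using True ae by (simp add: e_def)
      define C where "C = (2 * 3 powr e + (3*p)^n * (a / (a-1))) * 2 powr e"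
      show ?thesis unfolding mn
      proof (rule bigoI[of _ C])
        show "\<forall>\<^sub>F x in at_right 0. norm (P x) \<le> C * norm (x powr (e / 2))"
        proof (rule eventually_mono[OF evx])
          fix x :: real assume x: "0 < x \<and> x < 1/36"
          have "S x \<le> a / (a-1)" unfolding S_def using True by (rule sum_gt1')
          then have "P x \<le> 2 * (3 * dl x) powr e + (3*p)^n * dl x powr e * (a / (a-1))"
          proof -
            have "(3*p)^n * dl x powr e * S x \<le> (3*p)^n * dl x powr e * (a / (a-1))"
              by (rule mult_left_mono) (use assms(2) \<open>S x \<le> a / (a-1)\<close> in simp_all)
            then show ?thesis using core'[of x] x by linarith
          qed
          also have "\<dots> = 2 * (3 powr e * dl x powr e) + (3*p)^n * dl x powr e * (a / (a-1))"
            using three[of x] x by simp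
          also have "\<dots> = C * x powr (e/2)"
            using x by (simp add: dle C_def algebra_simps)
          finally show "norm (P x) \<le> C * norm (x powr (e / 2))" using P0 by simp
        qed
      qed
    next
      case False
      then have a1: "a < 1" using ne ae by (auto simp: e_def)
      have mn: "min (p * real n) (real n - 1) = real n - 1" using a1 ae by (simp add: e_def)
      define C where "C = (2 * 3 powr e + (3*p)^n / (1 - a)) * 2 powr (real n - 1)"
      show ?thesis unfolding mn
      proof (rule bigoI[of _ C])
        show "\<forall>\<^sub>F x in at_right 0. norm (P x) \<le> C * norm (x powr ((real n - 1) / 2))"
        proof (rule eventually_mono[OF evx])
          fix x :: real assume x: "0 < x \<and> x < 1/36"
          have d: "0 < dl x" "dl x \<le> 1/3" using dl0 x by auto
          have "S x \<le> real (m x) powr (1-a) / (1-a)" unfolding S_def using a0 a1 by (rule sum_lt1)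
          also have "\<dots> \<le> (1 / dl x) powr (1-a) / (1-a)"
            using a1 mle[of x] x by (intro divide_right_mono powr_mono2) auto
          finally have Sb: "S x \<le> (1 / dl x) powr (1-a) / (1-a)" .
          have i1: "dl x powr e * (1 / dl x) powr (1-a) = dl x powr (real n - 1)"
            using d by (simp add: powr_divide powr_add[symmetric] ae divide_powr_uminus powr_minus_divide[symmetric])
          have i2: "dl x powr e \<le> dl x powr (real n - 1)"
            using d a1 by (intro powr_mono') (auto simp: ae)
          have "P x \<le> 2 * (3 * dl x) powr e + (3*p)^n * dl x powr e * ((1 / dl x) powr (1-a) / (1-a))"
          proof -
            have "(3*p)^n * dl x powr e * S x \<le> (3*p)^n * dl x powr e * ((1 / dl x) powr (1-a) / (1-a))"
              by (rule mult_left_mono) (use assms(2) Sb in simp_all)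
            then show ?thesis using core'[of x] x by linarith
          qed
          also have "\<dots> = 2 * 3 powr e * dl x powr e + (3*p)^n / (1-a) * (dl x powr e * (1 / dl x) powr (1-a))"
            using x by (simp add: three)
          also have "\<dots> \<le> 2 * 3 powr e * dl x powr (real n - 1) + (3*p)^n / (1-a) * dl x powr (real n - 1)"
            unfolding i1 using i2 by simp
          also have "\<dots> = C * x powr ((real n - 1)/2)"
            using x by (simp add: dle C_def algebra_simps)
          finally show "norm (P x) \<le> C * norm (x powr ((real n - 1) / 2))" using P0 by simp
        qed
      qed
    qed
  next
    assume eq: "p * real n = real n - 1"
    then have a1: "a = 1" using ae by (simp add: e_def)
    have en: "e = real n - 1" using eq by (simp add: e_def)
    define C where "C = (2 * 3 powr e + (3*p)^n * 2) * 2 powr (real n - 1)"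
    show "P \<in> O[at_right 0](\<lambda>x. x powr ((real n - 1) / 2) * ln (1 / x))"
    proof (rule bigoI[of _ C])
      show "\<forall>\<^sub>F x in at_right 0. norm (P x) \<le> C * norm (x powr ((real n - 1) / 2) * ln (1 / x))"
      proof (rule eventually_mono[OF evx])
        fix x :: real assume x: "0 < x \<and> x < 1/36"
        have d: "0 < dl x" "dl x \<le> 1/3" using dl0 x by auto
        have l1: "1 \<le> ln (1 / x)"
        proof -
          have "x * exp 1 \<le> x * 3" using exp_le x by (intro mult_left_mono) auto
          then have "x * exp 1 \<le> 1" using x by linarith
          then have "exp 1 \<le> 1 / x" using x by (simp add: field_simps)
          then show ?thesis using x by (simp add: ln_ge_iff)
        qed
        have m1: "1 \<le> m x" unfolding m_def using d by (intro aux_ceil2) (auto simp: dl_def field_simps)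
        have "S x \<le> 1 + ln (real (m x))" unfolding S_def a1 using m1 by (rule sum_eq1)
        also have "ln (real (m x)) \<le> ln (1 / dl x)" using m1 mle[of x] x d by (subst ln_le_cancel_iff) auto
        also have "ln (1 / dl x) \<le> ln (1 / x)"
        proof -
          have "sqrt x \<ge> x" using x by (simp add: real_le_rsqrt power2_eq_square)
          moreover have "0 \<le> sqrt x" using x by simp
          ultimately have "x \<le> dl x" unfolding dl_def by linarith
          then show ?thesis using x d by (simp add: divide_left_mono)
        qed
        finally have Sb: "S x \<le> 2 * ln (1 / x)" using l1 by simp
        have "P x \<le> 2 * (3 * dl x) powr e + (3*p)^n * dl x powr e * (2 * ln (1 / x))"
        proof -
          have "(3*p)^n * dl x powr e * S x \<le> (3*p)^n * dl x powr e * (2 * ln (1 / x))"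
            by (rule mult_left_mono) (use assms(2) Sb in simp_all)
          then show ?thesis using core'[of x] x by linarith
        qed
        also have "\<dots> = 2 * (3 powr e * dl x powr e) + (3*p)^n * dl x powr e * (2 * ln (1 / x))"
          using three[of x] x by simp
        also have "\<dots> \<le> 2 * 3 powr e * dl x powr e * ln (1 / x) + (3*p)^n * dl x powr e * (2 * ln (1 / x))"
        proof -
          have "dl x powr e * 1 \<le> dl x powr e * ln (1 / x)" using l1 by (intro mult_left_mono) auto
          then have "3 powr e * dl x powr e \<le> 3 powr e * (dl x powr e * ln (1 / x))" by (intro mult_left_mono) auto
          then show ?thesis by (simp add: mult_ac)
        qed
        also have "\<dots> = C * (x powr ((real n - 1) / 2) * ln (1 / x))"
          using x by (simp add: dle C_def en algebra_simps)
        finally show "norm (P x) \<le> C * norm (x powr ((real n - 1) / 2) * ln (1 / x))"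
          using P0 l1 by simp
      qed
    qed
  qed
qed


end
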